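(* There exists a block gluing tree-shift that is not strongly irreducible, and there exists a uniformly block gluing tree-shift that is not uniformly strongly irreducible.
   Context: $\Sigma=\{0,1\}$. $\Sigma^*$ is the set of finite words, with $\epsilon$ the empty word. $\Sigma^k$ is the set of words of length $k$, and $\Sigma_n=\bigcup_{0\le k\le n}\Sigma^k$. A tree is $t:\Sigma^*\to\mathcal{A}$ with $\mathcal{A}$ finite, and we write $t_x=t(x)$. A pattern $u$ is a map on a finite prefix-closed support $S(u)$. A tree-shift is $\mathsf{X}_{\mathcal{F}}$, the set of trees in which no pattern of $\mathcal{F}$ occurs at any node. A pattern is accepted by $X$ if it occurs in some $t\in X$. $B_n(X)=\{t|_{\Sigma_{n-1}}:t\in X\}$. For $w\in\Sigma^*$, $t|_{wS(v)}=v$ means $t_{wy}=v_y$ for all $y\in S(v)$. A leaf of $u$ is $w\in S(u)$ with $w0,w1\notin S(u)$. A complete prefix code (CPC) is a finite set $P\subseteq\Sigma^*\setminus\{\epsilon\}$ such that no word of $P$ is a prefix of another, and every $x$ with $|x|\ge\max_{y\in P}|y|$ has a prefix in $P$. Patterns $u,v$ are connected through $P$ if there is $t\in X$ with $t|_{S(u)}=u$ and $t|_{wxS(v)}=v$ for every leaf $w$ of $u$ and every $x\in P$. $X$ is: - block gluing if there is a CPC $P$ such that for every $n\ge1$ any $u,v\in B_n(X)$ are connected through $P$; - uniformly block gluing if this holds with $P=\Sigma^k$ for some $k\ge1$; - strongly irreducible if there is a CPC $P$ through which any two patterns accepted by $X$ are connected; - uniformly strongly irreducible if this holds with $P=\Sigma^k$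 for some $k\ge1$. *)

theory Defs
  imports Main "HOL-Library.Sublist"
begin

text \<open>Words over \<Sigma> = {0,1} are bool lists (False = 0, True = 1); x is a prefix of x @ y.
  Trees are functions bool list \<Rightarrow> 'a; the finite alphabet is an explicit set A.\<close>

type_synonym word = "bool list"
type_synonym 'a tree = "word \<Rightarrow> 'a"
type_synonym 'a pattern = "word \<Rightarrow> 'a option"

definition is_pattern :: "'a pattern \<Rightarrow> bool" where
  "is_pattern u \<longleftrightarrow> finite (dom u) \<and> (\<forall>x y. x @ y \<in> dom u \<longrightarrow> x \<in> dom u)"

definition occurs_at :: "'a tree \<Rightarrow> word \<Rightarrow> 'a pattern \<Rightarrow> bool" where
  "occurs_at t w u \<longleftrightarrow> (\<forall>y \<in> dom u. u y = Some (t (w @ y)))"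

definition tree_shift_of :: "'a set \<Rightarrow> 'a pattern set \<Rightarrow> 'a tree set" where
  "tree_shift_of A F = {t. (\<forall>x. t x \<in> A) \<and> (\<forall>u \<in> F. \<forall>w. \<not> occurs_at t w u)}"

definition is_tree_shift :: "'a set \<Rightarrow> 'a tree set \<Rightarrow> bool" where
  "is_tree_shift A X \<longleftrightarrow> finite A \<and> (\<exists>F. (\<forall>u\<in>F. is_pattern u) \<and> X = tree_shift_of A F)"

definition accepted :: "'a tree set \<Rightarrow> 'a pattern \<Rightarrow> bool" where
  "accepted X u \<longleftrightarrow> is_pattern u \<and> (\<exists>t \<in> X. \<exists>w. occurs_at t w u)"

text \<open>B_n(X) = { t restricted to \<Sigma>_{n-1} : t \<in> X }\<close>
definition blocks :: "'a tree set \<Rightarrow> nat \<Rightarrow> 'a pattern set" where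
  "blocks X n = {(\<lambda>x. if length x < n then Some (t x) else None) | t. t \<in> X}"

definition leaf :: "'a pattern \<Rightarrow> word \<Rightarrow> bool" where
  "leaf u w \<longleftrightarrow> w \<in> dom u \<and> w @ [False] \<notin> dom u \<and> w @ [True] \<notin> dom u"

definition complete_prefix_code :: "word set \<Rightarrow> bool" where
  "complete_prefix_code P \<longleftrightarrow> finite P \<and> [] \<notin> P
     \<and> (\<forall>x\<in>P. \<forall>y\<in>P. prefix x y \<longrightarrow> x = y)
     \<and> (\<forall>x. (\<forall>y\<in>P. length y \<le> length x) \<longrightarrow> (\<exists>y\<in>P. prefix y x))"

definition connected_through :: "'a tree set \<Rightarrow> word set \<Rightarrow> 'a pattern \<Rightarrow> 'a pattern \<Rightarrow> bool" where
  "connected_through X P u v \<longleftrightarrow>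
     (\<exists>t \<in> X. occurs_at t [] u \<and> (\<forall>w x. leaf u w \<longrightarrow> x \<in> P \<longrightarrow> occurs_at t (w @ x) v))"

definition block_gluing :: "'a tree set \<Rightarrow> bool" where
  "block_gluing X \<longleftrightarrow> (\<exists>P. complete_prefix_code P \<and>
     (\<forall>n\<ge>1. \<forall>u \<in> blocks X n. \<forall>v \<in> blocks X n. connected_through X P u v))"

definition uniformly_block_gluing :: "'a tree set \<Rightarrow> bool" where
  "uniformly_block_gluing X \<longleftrightarrow> (\<exists>k\<ge>1.
     (\<forall>n\<ge>1. \<forall>u \<in> blocks X n. \<forall>v \<in> blocks X n. connected_through X {x. length x = k} u v))"

definition strongly_irreducible :: "'a tree set \<Rightarrow> bool" where
  "strongly_irreducible X \<longleftrightarrow> (\<exists>P. complete_prefix_code P \<and>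
     (\<forall>u v. accepted X u \<longrightarrow> accepted X v \<longrightarrow> connected_through X P u v))"

definition uniformly_strongly_irreducible :: "'a tree set \<Rightarrow> bool" where
  "uniformly_strongly_irreducible X \<longleftrightarrow> (\<exists>k\<ge>1.
     (\<forall>u v. accepted X u \<longrightarrow> accepted X v \<longrightarrow> connected_through X {x. length x = k} u v))"

end

theory Submission
  imports Defs
begin

definition XL :: "nat tree set" where
  "XL = {t. (\<forall>x. t x \<in> {0,1}) \<and> (\<forall>x y. length x = length y \<longrightarrow> t x = t y)}"

definition FL :: "nat pattern set" where
  "FL = {u. is_pattern u \<and> (\<exists>x y a b. u x = Some a \<and> u y = Some b \<and> length x = length y \<and> a \<noteq> b)}"

lemma XL_shift: "is_tree_shift {0,1} XL"
proof -
  have fin: "finite {0::nat,1}" by simp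
  have pat: "\<forall>u\<in>FL. is_pattern u" by (simp add: FL_def)
  have eq: "XL = tree_shift_of {0,1} FL"
  proof
    show "XL \<subseteq> tree_shift_of {0,1} FL"
    proof
      fix t assume t: "t \<in> XL"
      have "\<not> occurs_at t w u" if "u \<in> FL" for u w
      proof
        assume oc: "occurs_at t w u"
        from that obtain x y a b where h: "u x = Some a" "u y = Some b" "length x = length y" "a \<noteq> b"
          by (auto simp: FL_def)
        have "x \<in> dom u" "y \<in> dom u" using h(1,2) by (auto intro: domI)
        then have "u x = Some (t (w @ x))" "u y = Some (t (w @ y))"
          using oc unfolding occurs_at_def by blast+
        then have ab: "a = t (w @ x)" "b = t (w @ y)" using h(1,2) by simp_all
        have "length (w @ x) = length (w @ y)" using h(3) by simp
        then have "t (w @ x) = t (w @ y)" using t unfolding XL_def by blast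
        then show False using ab h(4) by simp
      qed
      moreover have "\<forall>x. t x \<in> {0,1}" using t unfolding XL_def by blast
      ultimately show "t \<in> tree_shift_of {0,1} FL" unfolding tree_shift_of_def by blast
    qed
  next
    show "tree_shift_of {0,1} FL \<subseteq> XL"
    proof
      fix t assume t: "t \<in> tree_shift_of {0,1} FL"
      have "t x = t y" if "length x = length y" for x y
      proof (rule ccontr)
        assume ne: "t x \<noteq> t y"
        define S where "S = set (prefixes x) \<union> set (prefixes y)"
        define u where "u = (\<lambda>z. if z \<in> S then Some (t z) else None)"
        have domu: "dom u = S" by (auto simp: u_def dom_def)
        have fin: "finite (dom u)" unfolding domu S_def by simp
        have pc: "\<forall>a b. a @ b \<in> dom u \<longrightarrow> a \<in> dom u"
        proof (intro allI impI)
          fix a b assume "a @ b \<in> dom u"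
          then have "prefix (a @ b) x \<or> prefix (a @ b) y" unfolding domu S_def by simp
          then have "prefix a x \<or> prefix a y" using append_prefixD by blast
          then show "a \<in> dom u" unfolding domu S_def by simp
        qed
        have "is_pattern u" unfolding is_pattern_def using fin pc by blast
        moreover have ux: "u x = Some (t x)" unfolding u_def S_def by simp
        moreover have uy: "u y = Some (t y)" unfolding u_def S_def by simp
        ultimately have "u \<in> FL" unfolding FL_def using ne that by blast
        moreover have "occurs_at t [] u" unfolding occurs_at_def domu by (simp add: u_def)
        ultimately show False using t unfolding tree_shift_of_def by blast
      qed
      moreover have "\<forall>x. t x \<in> {0,1}" using t unfolding tree_shift_of_def by blast
      ultimately show "t \<in> XL" unfolding XL_def by blast
    qed
  qed
  show ?thesis unfolding is_tree_shift_def
    using conjI[OF fin exI[where P="\<lambda>F. (\<forall>u\<in>F. is_pattern u) \<and> XL = tree_shift_of {0,1} F", OF conjI[OF pat eq]]] .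
qed

lemma dom_blk: "dom (\<lambda>x. if length x < n then Some (f x) else None) = {x. length x < n}"
  by (auto simp: dom_def)

lemma XL_glue:
  assumes "n \<ge> 1" "u \<in> blocks XL n" "v \<in> blocks XL n"
  shows "connected_through XL {x. length x = 1} u v"
proof -
  obtain t1 where t1: "t1 \<in> XL" "u = (\<lambda>x. if length x < n then Some (t1 x) else None)"
    using assms(2) unfolding blocks_def by blast
  obtain t2 where t2: "t2 \<in> XL" "v = (\<lambda>x. if length x < n then Some (t2 x) else None)"
    using assms(3) unfolding blocks_def by blast
  have du: "dom u = {x. length x < n}" using t1(2) dom_blk by simp
  have dv: "dom v = {x. length x < n}" using t2(2) dom_blk by simp
  define t where "t = (\<lambda>z. if length z < n then t1 z else t2 (replicate (length z - n) False))"
  have lc2: "\<And>x y. length x = length y \<Longrightarrow> t2 x = t2 y" using t2(1) unfolding XL_def by blast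
  have lc1: "\<And>x y. length x = length y \<Longrightarrow> t1 x = t1 y" using t1(1) unfolding XL_def by blast
  have r1: "\<And>x. t1 x \<in> {0,1}" using t1(1) unfolding XL_def by blast
  have r2: "\<And>x. t2 x \<in> {0,1}" using t2(1) unfolding XL_def by blast
  have "t \<in> XL" unfolding XL_def t_def
  proof (intro CollectI conjI allI impI)
    fix x show "(if length x < n then t1 x else t2 (replicate (length x - n) False)) \<in> {0, 1}"
      using r1 r2 by simp
  next
    fix x y :: word assume "length x = length y"
    then show "(if length x < n then t1 x else t2 (replicate (length x - n) False)) =
      (if length y < n then t1 y else t2 (replicate (length y - n) False))"
    proof (cases "length x < n")
      case True
      then show ?thesis using lc1[OF \<open>length x = length y\<close>] \<open>length x = length y\<close> by simp
    next
      case False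
      then show ?thesis using \<open>length x = length y\<close> by simp
    qed
  qed
  moreover have "occurs_at t [] u" unfolding occurs_at_def du by (simp add: t1(2) t_def)
  moreover have "occurs_at t (w @ x) v" if "leaf u w" "x \<in> {x. length x = 1}" for w x
  proof -
    have "length w < n" "\<not> length (w @ [False]) < n" using that(1) du unfolding leaf_def by auto
    then have lw: "length w = n - 1" by simp
    have lx: "length x = 1" using that(2) by simp
    show ?thesis unfolding occurs_at_def dv
    proof
      fix y :: word assume y: "y \<in> {x. length x < n}"
      have "\<not> length (w @ x @ y) < n" using lw lx assms(1) by simp
      then have "t (w @ x @ y) = t2 (replicate (length (w @ x @ y) - n) False)" by (simp add: t_def)
      also have "\<dots> = t2 y" using lw lx assms(1) by (intro lc2) simp
      finally show "v y = Some (t ((w @ x) @ y))" using y t2(2) by simp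
    qed
  qed
  ultimately show ?thesis unfolding connected_through_def by blast
qed

lemma cpc1: "complete_prefix_code {x::word. length x = 1}"
proof -
  have "finite {x::word. length x = 1}"
  proof -
    have "{x::word. length x = 1} \<subseteq> {[False],[True]}"
      by (auto simp: length_Suc_conv)
    then show ?thesis by (rule finite_subset) simp
  qed
  moreover have "\<forall>x::word. (\<forall>y\<in>{x::word. length x = 1}. length y \<le> length x) \<longrightarrow> (\<exists>y\<in>{x::word. length x = 1}. prefix y x)"
  proof (intro allI impI)
    fix x :: word assume H: "\<forall>y\<in>{x::word. length x = 1}. length y \<le> length x"
    have "[False] \<in> {x::word. length x = 1}" by simp
    then have "length [False] \<le> length x" using H by blast
    then have "take 1 x \<in> {x::word. length x = 1} \<and> prefix (take 1 x) x"
      by (auto simp: take_is_prefix)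
    then show "\<exists>y\<in>{x::word. length x = 1}. prefix y x" by blast
  qed
  ultimately show ?thesis unfolding complete_prefix_code_def
    by (auto simp: prefix_def)
qed

definition U :: "nat pattern" where
  "U z = (if z \<in> {[], [False], [True], [True,False], [True,True]} then Some 0 else None)"
definition V :: "nat pattern" where
  "V z = (if z = [] then Some 0 else if z = [False] then Some 1 else None)"

lemma domU: "dom U = {[], [False], [True], [True,False], [True,True]}"
  by (auto simp: U_def dom_def split: if_splits)
lemma domV: "dom V = {[], [False]}"
  by (auto simp: V_def dom_def split: if_splits)

lemma U_acc: "accepted XL U"
proof -
  have "is_pattern U" unfolding is_pattern_def domU
    by (auto simp: append_eq_Cons_conv)
  moreover have "(\<lambda>_. 0::nat) \<in> XL" by (simp add: XL_def)
  moreover have "occurs_at (\<lambda>_. 0) [] U" unfolding occurs_at_def domU by (auto simp: U_def)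
  ultimately show ?thesis unfolding accepted_def by blast
qed

lemma V_acc: "accepted XL V"
proof -
  have "is_pattern V" unfolding is_pattern_def domV
    by (auto simp: append_eq_Cons_conv)
  moreover have "(\<lambda>z. if z = [] then 0::nat else 1) \<in> XL" by (auto simp: XL_def)
  moreover have "occurs_at (\<lambda>z. if z = [] then 0::nat else 1) [] V" unfolding occurs_at_def domV by (auto simp: V_def)
  ultimately show ?thesis unfolding accepted_def by blast
qed

lemma not_conn:
  assumes "x \<in> P"
  shows "\<not> connected_through XL P U V"
proof
  assume "connected_through XL P U V"
  then obtain t where t: "t \<in> XL" and h: "\<And>w x. leaf U w \<Longrightarrow> x \<in> P \<Longrightarrow> occurs_at t (w @ x) V"
    unfolding connected_through_def by blast
  have l1: "leaf U [False]" and l2: "leaf U [True,False]" by (auto simp: leaf_def domU)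
  have "occurs_at t ([False] @ x) V" using h l1 assms by blast
  then have a: "t ([False] @ x @ [False]) = 1"
    unfolding occurs_at_def domV by (auto simp: V_def)
  have "occurs_at t ([True,False] @ x) V" using h l2 assms by blast
  then have b: "t ([True,False] @ x) = 0"
    unfolding occurs_at_def domV by (auto simp: V_def)
  have "t ([False] @ x @ [False]) = t ([True,False] @ x)" using t by (auto simp: XL_def)
  then show False using a b by simp
qed

theorem corollary3p11:
  shows "(\<exists>(A::nat set) X. is_tree_shift A X \<and> block_gluing X \<and> \<not> strongly_irreducible X)
       \<and> (\<exists>(A::nat set) X. is_tree_shift A X \<and> uniformly_block_gluing X
              \<and> \<not> uniformly_strongly_irreducible X)"
proof -
  have g: "\<forall>n\<ge>1. \<forall>u \<in> blocks XL n. \<forall>v \<in> blocks XL n. connected_through XL {x. length x = 1} u v"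
    using XL_glue by blast
  have bg: "block_gluing XL" unfolding block_gluing_def
    by (rule exI[where x="{x. length x = 1}"]) (rule conjI[OF cpc1 g])
  have ubg: "uniformly_block_gluing XL" unfolding uniformly_block_gluing_def
    by (rule exI[where x="1::nat"]) (rule conjI[OF order_refl g])
  have nsi: "\<not> strongly_irreducible XL"
  proof
    assume "strongly_irreducible XL"
    then obtain P where P: "complete_prefix_code P" "\<forall>u v. accepted XL u \<longrightarrow> accepted XL v \<longrightarrow> connected_through XL P u v"
      unfolding strongly_irreducible_def by blast
    have "P \<noteq> {}" using P(1) unfolding complete_prefix_code_def by auto
    then obtain x where x: "x \<in> P" by blast
    have "connected_through XL P U V" using P(2) U_acc V_acc by blast
    then show False using not_conn[OF x] by blast
  qed
  have nusi: "\<not> uniformly_strongly_irreducible XL"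
  proof
    assume "uniformly_strongly_irreducible XL"
    then obtain k where k: "\<forall>u v. accepted XL u \<longrightarrow> accepted XL v \<longrightarrow> connected_through XL {x. length x = k} u v"
      unfolding uniformly_strongly_irreducible_def by blast
    have x: "replicate k False \<in> {x. length x = k}" by simp
    have "connected_through XL {x. length x = k} U V" using k U_acc V_acc by blast
    then show False using not_conn[OF x] by blast
  qed
  have c1: "is_tree_shift {0,1} XL \<and> block_gluing XL \<and> \<not> strongly_irreducible XL"
    using XL_shift bg nsi by blast
  have c2: "is_tree_shift {0,1} XL \<and> uniformly_block_gluing XL \<and> \<not> uniformly_strongly_irreducible XL"
    using XL_shift ubg nusi by blast
  show ?thesis using c1 c2 by blast
qed

end
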